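(* For all integers $h \ge 2$, we have $(h+1)^2 \in \mathcal{R}_{\mathbf{Z}}(h,4)$, and for all integers $i_0 \in [0,h-2]$ and $r \in [0,1]$, \[ (i_0+1)\big(2(h-i_0) - r\big) + (h-i_0)^2 \in \mathcal{R}_{\mathbf{Z}}(h,4). \]
   Context: For a positive integer $h$ and a finite set $A$ of integers, $hA$ denotes the set of all sums $a_1+\cdots+a_h$ with $a_1,\ldots,a_h \in A$ (not necessarily distinct). The sumset size set is $\mathcal{R}_{\mathbf{Z}}(h,k) = \{ |hA| : A \subseteq \mathbf{Z},\ |A| = k\}$. For real $u,v$, $[u,v] = \{n \in \mathbf{Z} : u \le n \le v\}$. *)

theory Defs
  imports Main
begin

definition hsumset :: "nat \<Rightarrow> int set \<Rightarrow> int set" where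
  "hsumset h A = {(\<Sum>i<h. a i) | a. \<forall>i<h. a i \<in> A}"

text \<open>R_Z(h,k) = { |hA| : A subset of Z, |A| = k }.\<close>
definition sumset_sizes :: "nat \<Rightarrow> nat \<Rightarrow> nat set" where
  "sumset_sizes h k = {card (hsumset h A) | A. finite A \<and> card A = k}"

end

theory Submission
  imports Defs
begin

lemma hsumset_0: "hsumset 0 A = {0}"
  unfolding hsumset_def by auto

lemma hsumset_Suc:
  "hsumset (Suc h) A = {x + y | x y. x \<in> hsumset h A \<and> y \<in> A}"
proof
  show "hsumset (Suc h) A \<subseteq> {x + y | x y. x \<in> hsumset h A \<and> y \<in> A}"
  proof
    fix z assume "z \<in> hsumset (Suc h) A"
    then obtain a where z: "z = (\<Sum>i<Suc h. a i)" and a: "\<forall>i<Suc h. a i \<in> A"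
      unfolding hsumset_def by auto
    have "(\<Sum>i<h. a i) \<in> hsumset h A" unfolding hsumset_def using a by auto
    moreover have "a h \<in> A" using a by auto
    moreover have "z = (\<Sum>i<h. a i) + a h" using z by simp
    ultimately show "z \<in> {x + y | x y. x \<in> hsumset h A \<and> y \<in> A}" by blast
  qed
next
  show "{x + y | x y. x \<in> hsumset h A \<and> y \<in> A} \<subseteq> hsumset (Suc h) A"
  proof
    fix z assume "z \<in> {x + y | x y. x \<in> hsumset h A \<and> y \<in> A}"
    then obtain a y where z: "z = (\<Sum>i<h. a i) + y" and a: "\<forall>i<h. a i \<in> A" and y: "y \<in> A"
      unfolding hsumset_def by auto
    define b where "b = a(h := y)"
    have "(\<Sum>i<h. b i) = (\<Sum>i<h. a i)" unfolding b_def by (intro sum.cong) auto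
    then have "z = (\<Sum>i<Suc h. b i)" using z by (simp add: b_def)
    moreover have "\<forall>i<Suc h. b i \<in> A" using a y by (auto simp: b_def less_Suc_eq)
    ultimately show "z \<in> hsumset (Suc h) A" unfolding hsumset_def by blast
  qed
qed

definition NN :: "nat \<Rightarrow> nat \<Rightarrow> nat set" where
  "NN m h = {j*m+t | j t. j \<le> h \<and> t \<le> 2*(h-j)}"

lemma NN_0: "NN m 0 = {0}"
  unfolding NN_def by auto

lemma hs_char:
  assumes m: "m \<ge> 3"
  shows "hsumset h {0,1,2,int m} = int ` NN m h"
proof (induction h)
  case 0
  then show ?case by (simp add: hsumset_0 NN_0)
next
  case (Suc h)
  have "{x + y | x y. x \<in> int ` NN m h \<and> y \<in> {0,1,2,int m}} = int ` NN m (Suc h)"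
  proof
    show "{x + y | x y. x \<in> int ` NN m h \<and> y \<in> {0,1,2,int m}} \<subseteq> int ` NN m (Suc h)"
    proof
      fix z assume "z \<in> {x + y | x y. x \<in> int ` NN m h \<and> y \<in> {0,1,2,int m}}"
      then obtain x y where zxy: "z = x + y" and x: "x \<in> int ` NN m h"
        and y: "y \<in> {0,1,2,int m}" by blast
      from x obtain j t where x': "x = int (j*m+t)" and jt: "j \<le> h" "t \<le> 2*(h-j)"
        unfolding NN_def by auto
      have z: "z = int (j*m+t) + y" using zxy x' by simp
      show "z \<in> int ` NN m (Suc h)"
      proof (cases "y = int m")
        case True
        have "z = int ((j+1)*m + t)" using z True by simp
        moreover have "j+1 \<le> Suc h" "t \<le> 2*(Suc h - (j+1))" using jt by auto
        ultimately show ?thesis unfolding NN_def by blast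
      next
        case False
        then obtain n where n: "y = int n" "n \<le> 2" using y by auto
        have "z = int (j*m + (t+n))" using z n by simp
        moreover have "j \<le> Suc h" "t + n \<le> 2*(Suc h - j)" using jt n by auto
        ultimately show ?thesis unfolding NN_def by blast
      qed
    qed
  next
    show "int ` NN m (Suc h) \<subseteq> {x + y | x y. x \<in> int ` NN m h \<and> y \<in> {0,1,2,int m}}"
    proof
      fix z assume "z \<in> int ` NN m (Suc h)"
      then obtain j t where z: "z = int (j*m+t)" and jt: "j \<le> Suc h" "t \<le> 2*(Suc h-j)"
        unfolding NN_def by auto
      show "z \<in> {x + y | x y. x \<in> int ` NN m h \<and> y \<in> {0,1,2,int m}}"
      proof (cases "j = Suc h")
        case True
        then have t0: "t = 0" using jt by simp
        have "h*m + 0 \<in> NN m h" unfolding NN_def by (intro CollectI exI[of _ h] exI[of _ 0]) simp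
        moreover have "z = int (h*m+0) + int m" using z True t0 by simp
        ultimately show ?thesis by blast
      next
        case False
        then have jh: "j \<le> h" using jt by simp
        show ?thesis
        proof (cases "t \<le> 2*(h-j)")
          case True
          then have "j*m+t \<in> NN m h" using jh unfolding NN_def by auto
          moreover have "z = int (j*m+t) + 0" using z by simp
          ultimately show ?thesis by blast
        next
          case False
          show ?thesis
          proof (cases "t \<ge> 2")
            case True
            have "t-2 \<le> 2*(h-j)" using jh jt False True by auto
            then have "j*m+(t-2) \<in> NN m h" using jh unfolding NN_def by blast
            moreover have "z = int (j*m+(t-2)) + 2" using z True by simp
            ultimately show ?thesis by blast
          next
            case f2: False
            then have "t-1 \<le> 2*(h-j)" using jh jt False by auto
            then have "j*m+(t-1) \<in> NN m h" using jh unfolding NN_def by blast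
            moreover have "t \<ge> 1" using False by auto
            then have "z = int (j*m+(t-1)) + 1" using z by simp
            ultimately show ?thesis by blast
          qed
        qed
      qed
    qed
  qed
  then show ?case using Suc by (simp add: hsumset_Suc)
qed

definition PP :: "nat \<Rightarrow> nat \<Rightarrow> (nat \<times> nat) set" where
  "PP m h = Sigma {..h} (\<lambda>q. {..<min m (2*(h-q)+1)})"

lemma NN_PP:
  assumes m: "m \<ge> 3"
  shows "NN m h = (\<lambda>(q,s). q*m+s) ` PP m h"
proof
  show "(\<lambda>(q,s). q*m+s) ` PP m h \<subseteq> NN m h"
  proof
    fix x assume "x \<in> (\<lambda>(q,s). q*m+s) ` PP m h"
    then obtain a b where x: "x = a*m+b" "a \<le> h" "b < Suc (2*(h-a))"
      unfolding PP_def by auto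
    then have "b \<le> 2*(h-a)" by simp
    then show "x \<in> NN m h" unfolding NN_def using x by blast
  qed
next
  show "NN m h \<subseteq> (\<lambda>(q,s). q*m+s) ` PP m h"
  proof
    fix x assume "x \<in> NN m h"
    then obtain j t where x: "x = j*m+t" and jt: "j \<le> h" "t \<le> 2*(h-j)"
      unfolding NN_def by auto
    define d where "d = t div m"
    define s where "s = t mod m"
    have t: "t = d*m + s" unfolding d_def s_def by simp
    have sm: "s < m" unfolding s_def using m by simp
    have "d*3 \<le> d*m" using m by simp
    then have a: "d*3 + s \<le> 2*(h-j)" using t jt by linarith
    have "x = (j+d)*m + s" using x t by (simp add: algebra_simps)
    moreover have "(j+d, s) \<in> PP m h" unfolding PP_def using a sm jt by auto
    ultimately show "x \<in> (\<lambda>(q,s). q*m+s) ` PP m h" by force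
  qed
qed

lemma inj_PP:
  assumes m: "m \<ge> 3"
  shows "inj_on (\<lambda>(q,s). q*m+s) (PP m h)"
proof (rule inj_onI, clarify)
  fix q s q' s' assume A: "(q,s) \<in> PP m h" "(q',s') \<in> PP m h" and e: "q*m+s = q'*m+s'"
  have "s < m" "s' < m" using A unfolding PP_def by auto
  then have "(q*m+s) div m = q" "(q'*m+s') div m = q'" "(q*m+s) mod m = s" "(q'*m+s') mod m = s'"
    using m by auto
  then show "q = q' \<and> s = s'" using e by metis
qed

lemma card_hs:
  assumes m: "m \<ge> 3"
  shows "card (hsumset h {0,1,2,int m}) = (\<Sum>u<Suc h. min m (2*u+1))"
proof -
  have "card (hsumset h {0,1,2,int m}) = card (NN m h)"
    using hs_char[OF m] by (simp add: card_image)
  also have "\<dots> = card (PP m h)"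
    using NN_PP[OF m] inj_PP[OF m] by (simp add: card_image)
  also have "\<dots> = (\<Sum>q\<le>h. min m (2*(h-q)+1))"
    unfolding PP_def by (simp add: card_SigmaI)
  also have "\<dots> = (\<Sum>q<Suc h. min m (2*(Suc h - Suc q)+1))"
    by (simp add: lessThan_Suc_atMost)
  also have "\<dots> = (\<Sum>u<Suc h. min m (2*u+1))"
    by (rule sum.nat_diff_reindex[where g = "\<lambda>u. min m (2*u+1)"])
  finally show ?thesis .
qed

lemma sum_odd: "(\<Sum>u<n. 2*u+1) = (n::nat)^2"
  by (induction n) (auto simp: power2_eq_square)

lemma sum_min1:
  assumes "2*h+1 \<le> m"
  shows "(\<Sum>u<Suc h. min m (2*u+1)) = (h+1)^2"
proof -
  have "(\<Sum>u<Suc h. min m (2*u+1)) = (\<Sum>u<Suc h. 2*u+1)"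
    using assms by (intro sum.cong) auto
  then show ?thesis using sum_odd[of "Suc h"] by simp
qed

lemma sum_min2:
  assumes k: "k \<ge> 1" "k \<le> h" and m: "m = 2*k - r" "r \<le> 1"
  shows "(\<Sum>u<Suc h. min m (2*u+1)) = k^2 + (h+1-k)*m"
  using k(2)
proof (induction h rule: dec_induct)
  case base
  have "(\<Sum>u<k. min m (2*u+1)) = (\<Sum>u<k. 2*u+1)"
    using m k by (intro sum.cong) auto
  then show ?case using sum_odd m k by simp
next
  case (step n)
  have "min m (2*Suc n+1) = m" using m step by auto
  then show ?case using step by (simp add: Suc_diff_le algebra_simps)
qed

lemma mem_sizes:
  assumes m: "m \<ge> 3"
  shows "(\<Sum>u<Suc h. min m (2*u+1)) \<in> sumset_sizes h 4"
proof -
  have "card {0,1,2,int m} = 4" using m by auto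
  then show ?thesis unfolding sumset_sizes_def using card_hs[OF m, of h, symmetric] by blast
qed

theorem mainTheorem8:
  fixes h :: nat
  assumes "h \<ge> 2"
  shows "(h + 1)^2 \<in> sumset_sizes h 4 \<and>
    (\<forall>i0 r. i0 \<le> h - 2 \<and> r \<le> 1 \<longrightarrow>
       (i0 + 1) * (2 * (h - i0) - r) + (h - i0)^2 \<in> sumset_sizes h 4)"
proof (intro conjI allI impI)
  show "(h + 1)^2 \<in> sumset_sizes h 4"
    using mem_sizes[of "2*h+1" h] sum_min1[of h "2*h+1"] assms by simp
next
  fix i0 r :: nat assume a: "i0 \<le> h - 2 \<and> r \<le> 1"
  define k where "k = h - i0"
  have k: "k \<ge> 2" "k \<le> h" using a assms unfolding k_def by auto
  have m3: "2*k - r \<ge> 3" using k a by auto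
  have "(\<Sum>u<Suc h. min (2*k-r) (2*u+1)) = k^2 + (h+1-k)*(2*k-r)"
    using sum_min2[of k h "2*k-r" r] k a by auto
  moreover have "h+1-k = i0+1" using k unfolding k_def by auto
  ultimately show "(i0 + 1) * (2 * (h - i0) - r) + (h - i0)^2 \<in> sumset_sizes h 4"
    using mem_sizes[OF m3, of h] unfolding k_def by (simp add: algebra_simps)
qed

end
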